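(* Let $n$ be even, $F\colon\mathbb F_2^n\to\mathbb F_2^n$ a quadratic APN function, and $\mathcal V_F=\{V_b\colon b\in\mathbb F_2^n\setminus\{0\},\ \dim(V_b)\ge1\}$. Then $|N_F|=|\mathcal V_F|$.
   Context: $\langle\cdot,\cdot\rangle$ is the standard dot product. $F$ is APN if for every $a\ne0$ and $c$, $F(x)+F(x+a)=c$ has at most 2 solutions; quadratic if each component $F_b(x)=\langle b,F(x)\rangle$ is a quadratic form plus an affine function. $F_b$ is bent if $|W_F(b,a)|=2^{n/2}$ for all $a$, where $W_F(b,a)=\sum_x(-1)^{F_b(x)+\langle x,a\rangle}$. $N_F=\{b\in\mathbb F_2^n\setminus\{0\}\colon F_b\text{ is not bent}\}$. With $D_{F,a}(x)=F(x)+F(x+a)$, $H_b=\{x:\langle b,x\rangle=0\}$, $\overline{H_b}=\{x:\langle b,x\rangle=1\}$: $T_b=\{a:\mathrm{Im}(D_{F,a})=H_b\}\cup\{0\}$, $\overline{T_b}=\{a:\mathrm{Im}(D_{F,a})=\overline{H_b}\}$, $V_b=T_b\cup\overline{T_b}$ (a linear subspace). *)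

theory Defs
  imports "HOL-Analysis.Analysis" "HOL-Library.Z2"
begin

text \<open>F_2^n is modelled as bit ^ 'n, with n = CARD('n).\<close>

definition dotp :: "bit ^ 'n \<Rightarrow> bit ^ 'n \<Rightarrow> bit" where
  "dotp b x = (\<Sum>i\<in>UNIV. b $ i * x $ i)"

definition component :: "(bit ^ 'n \<Rightarrow> bit ^ 'n) \<Rightarrow> bit ^ 'n \<Rightarrow> bit ^ 'n \<Rightarrow> bit" where
  "component F b x = dotp b (F x)"

definition is_APN :: "(bit ^ 'n \<Rightarrow> bit ^ 'n) \<Rightarrow> bool" where
  "is_APN F \<longleftrightarrow> (\<forall>a c. a \<noteq> 0 \<longrightarrow> card {x. F x + F (x + a) = c} \<le> 2)"

definition is_quadratic :: "(bit ^ 'n \<Rightarrow> bit ^ 'n) \<Rightarrow> bool" where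
  "is_quadratic F \<longleftrightarrow> (\<forall>b. \<exists>(c :: 'n \<Rightarrow> 'n \<Rightarrow> bit) (a :: bit ^ 'n) (e :: bit).
      \<forall>x. component F b x = (\<Sum>i\<in>UNIV. \<Sum>j\<in>UNIV. c i j * x $ i * x $ j) + dotp a x + e)"

definition sgn_bit :: "bit \<Rightarrow> int" where
  "sgn_bit v = (if v = 0 then 1 else -1)"

definition walsh :: "(bit ^ 'n \<Rightarrow> bit ^ 'n) \<Rightarrow> bit ^ 'n \<Rightarrow> bit ^ 'n \<Rightarrow> int" where
  "walsh F b a = (\<Sum>x\<in>UNIV. sgn_bit (component F b x + dotp x a))"

definition is_bent_component :: "(bit ^ 'n \<Rightarrow> bit ^ 'n) \<Rightarrow> bit ^ 'n \<Rightarrow> bool" where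
  "is_bent_component F b \<longleftrightarrow> (\<forall>a. real_of_int \<bar>walsh F b a\<bar> = sqrt (2 ^ CARD('n)))"

definition NF :: "(bit ^ 'n \<Rightarrow> bit ^ 'n) \<Rightarrow> (bit ^ 'n) set" where
  "NF F = {b. b \<noteq> 0 \<and> \<not> is_bent_component F b}"

definition Dder :: "(bit ^ 'n \<Rightarrow> bit ^ 'n) \<Rightarrow> bit ^ 'n \<Rightarrow> bit ^ 'n \<Rightarrow> bit ^ 'n" where
  "Dder F a x = F x + F (x + a)"

definition Hyp :: "bit ^ 'n \<Rightarrow> (bit ^ 'n) set" where
  "Hyp b = {x. dotp b x = 0}"

definition Hypc :: "bit ^ 'n \<Rightarrow> (bit ^ 'n) set" where
  "Hypc b = {x. dotp b x = 1}"

definition Tset :: "(bit ^ 'n \<Rightarrow> bit ^ 'n) \<Rightarrow> bit ^ 'n \<Rightarrow> (bit ^ 'n) set" where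
  "Tset F b = {a. range (Dder F a) = Hyp b} \<union> {0}"

definition Tcset :: "(bit ^ 'n \<Rightarrow> bit ^ 'n) \<Rightarrow> bit ^ 'n \<Rightarrow> (bit ^ 'n) set" where
  "Tcset F b = {a. range (Dder F a) = Hypc b}"

definition Vset :: "(bit ^ 'n \<Rightarrow> bit ^ 'n) \<Rightarrow> bit ^ 'n \<Rightarrow> (bit ^ 'n) set" where
  "Vset F b = Tset F b \<union> Tcset F b"

definition VF :: "(bit ^ 'n \<Rightarrow> bit ^ 'n) \<Rightarrow> (bit ^ 'n) set set" where
  "VF F = {Vset F b | b. b \<noteq> 0 \<and> vec.dim (Vset F b) \<ge> 1}"

end

theory Submission
  imports Defs
begin

lemma bit_univ: "(UNIV::bit set) = {0,1}" by (auto intro: bit.exhaust)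

instance bit :: finite
proof
  show "finite (UNIV::bit set)" unfolding bit_univ by (rule finite.insertI finite.emptyI)+
qed

lemma card_bit: "CARD(bit) = 2"
  unfolding bit_univ by simp

declare card_bit [simp]

declare add_bit_eq_xor [simp del] mult_bit_eq_and [simp del]

lemma bit_add_self [simp]: "(x::bit) + x = 0"
  by (cases x) simp_all

lemma vec_add_self [simp]: "(x::bit^'n) + x = 0"
  by (simp add: vec_eq_iff)

lemma vec_add_cancel [simp]: "(x::bit^'n) + a + a = x"
  by (simp add: add.assoc)

lemma card_univ_vec: "CARD(bit^'n) = 2 ^ CARD('n)"
  by (simp add: CARD_vec card_bit)

lemma dotp_add: "dotp b (x + y) = dotp b x + dotp b y"
  unfolding dotp_def by (simp add: distrib_left sum.distrib)

lemma dotp_comm: "dotp b x = dotp x b"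
  unfolding dotp_def by (simp add: mult.commute)

lemma dotp_zero [simp]: "dotp b 0 = 0"
  unfolding dotp_def by simp

lemma dotp_axis: "dotp b (axis i 1) = b $ i"
  unfolding dotp_def axis_def by (simp add: if_distrib cong: if_cong)

lemma sgn_add: "sgn_bit (p + q) = sgn_bit p * sgn_bit q"
  by (cases p; cases q) (simp_all add: sgn_bit_def)

lemma sum_shift:
  fixes h :: "'a::ab_group_add \<Rightarrow> 'b::comm_monoid_add"
  shows "(\<Sum>x\<in>UNIV. h (x + e)) = (\<Sum>x\<in>UNIV. h x)"
  by (rule sum.reindex_bij_witness[where i="\<lambda>x. x - e" and j="\<lambda>x. x + e"]) auto

lemma comp_D: "component F b x + component F b (x + a) = dotp b (Dder F a x)"
  unfolding component_def Dder_def by (simp add: dotp_add)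

lemma bit_quad_id:
  fixes c xi xj ai aj ei ej :: bit
  shows "c * xi * xj + c * (xi + ai) * (xj + aj) + c * (xi + ei) * (xj + ej)
    + c * (xi + ai + ei) * (xj + aj + ej) = c * (ai * ej + ei * aj)"
  by (cases c; cases xi; cases xj; cases ai; cases aj; cases ei; cases ej) simp_all

lemma quad4:
  assumes "is_quadratic F"
  shows "component F b x + component F b (x + a) + component F b (x + e) + component F b (x + a + e)
    = component F b 0 + component F b a + component F b e + component F b (a + e)"
proof -
  obtain c a0 e0 where h: "\<And>x. component F b x = (\<Sum>i\<in>UNIV. \<Sum>j\<in>UNIV. c i j * x $ i * x $ j) + dotp a0 x + e0"
    using assms unfolding is_quadratic_def by blast
  define Q where "Q x = (\<Sum>i\<in>UNIV. \<Sum>j\<in>UNIV. c i j * x $ i * x $ j)" for x :: "bit^'a"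
  have Qk: "Q y + Q (y + a) + Q (y + e) + Q (y + a + e) = (\<Sum>i\<in>UNIV. \<Sum>j\<in>UNIV. c i j * (a$i * e$j + e$i * a$j))" for y
    unfolding Q_def by (simp add: sum.distrib[symmetric] bit_quad_id)
  have L: "component F b y + component F b (y + a) + component F b (y + e) + component F b (y + a + e)
     = Q y + Q (y + a) + Q (y + e) + Q (y + a + e)" for y
  proof -
    have "component F b y + component F b (y + a) + component F b (y + e) + component F b (y + a + e)
      = (Q y + Q (y + a) + Q (y + e) + Q (y + a + e)) + (dotp a0 y + dotp a0 (y+a) + dotp a0 (y+e) + dotp a0 (y+a+e))
        + (e0 + e0 + e0 + e0)"
      unfolding h Q_def by (simp add: algebra_simps)
    also have "dotp a0 y + dotp a0 (y+a) + dotp a0 (y+e) + dotp a0 (y+a+e) = 0"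
      by (simp add: dotp_add algebra_simps)
    also have "e0 + e0 + e0 + e0 = (0::bit)" by (simp add: add.assoc[symmetric])
    finally show ?thesis by simp
  qed
  show ?thesis using L[of x] L[of 0] Qk[of x] Qk[of 0] by simp
qed


lemma D_self: "Dder F a (x + a) = Dder F a x"
  unfolding Dder_def by (simp add: add.commute add.assoc[symmetric] del: vec_add_cancel)

lemma fiber_card:
  assumes apn: "is_APN F" and a: "a \<noteq> 0"
  shows "card {x. Dder F a x = Dder F a y} = 2"
proof -
  have le: "card {x. Dder F a x = Dder F a y} \<le> 2"
    using apn a unfolding is_APN_def Dder_def by blast
  have "y + a \<noteq> y" using a by (metis add_cancel_right_right)
  then have "card {y, y + a} = 2" by simp
  moreover have "{y, y + a} \<subseteq> {x. Dder F a x = Dder F a y}" by (simp add: D_self)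
  ultimately have "2 \<le> card {x. Dder F a x = Dder F a y}"
    by (metis card_mono finite)
  with le show ?thesis by simp
qed

lemma range_card:
  fixes F :: "bit^'n \<Rightarrow> bit^'n"
  assumes apn: "is_APN F" and a: "a \<noteq> 0"
  shows "2 * card (range (Dder F a)) = 2 ^ CARD('n)"
proof -
  have U: "(UNIV :: (bit^'n) set) = (\<Union>y\<in>range (Dder F a). {x. Dder F a x = y})" by auto
  have "CARD(bit^'n) = (\<Sum>y\<in>range (Dder F a). card {x. Dder F a x = y})"
    by (subst U, rule card_UN_disjoint) auto
  also have "\<dots> = (\<Sum>y\<in>range (Dder F a). 2)"
    by (rule sum.cong) (auto simp: fiber_card[OF apn a])
  finally show ?thesis by (simp add: card_univ_vec)
qed

lemma hyp_card:
  fixes b :: "bit^'n"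
  assumes b: "b \<noteq> 0"
  shows "2 * card (Hyp b) = 2 ^ CARD('n)" "2 * card (Hypc b) = 2 ^ CARD('n)"
proof -
  obtain i where bi: "b $ i = 1" using b by (metis vec_eq_iff zero_index bit_not_zero_iff)
  define e :: "bit^'n" where "e = axis i 1"
  have de: "dotp b e = 1" unfolding e_def dotp_axis bi ..
  have bij: "bij_betw (\<lambda>x. x + e) (Hyp b) (Hypc b)"
  proof (rule bij_betw_byWitness[where f'="\<lambda>x. x + e"])
    show "\<forall>x\<in>Hyp b. x + e + e = x" by simp
    show "\<forall>x\<in>Hypc b. x + e + e = x" by simp
    show "(\<lambda>x. x + e) ` Hyp b \<subseteq> Hypc b" by (auto simp: Hyp_def Hypc_def dotp_add de)
    show "(\<lambda>x. x + e) ` Hypc b \<subseteq> Hyp b" by (auto simp: Hyp_def Hypc_def dotp_add de)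
  qed
  have eq: "card (Hyp b) = card (Hypc b)" using bij_betw_same_card[OF bij] .
  have "UNIV = Hyp b \<union> Hypc b" by (auto simp: Hyp_def Hypc_def intro: bit.exhaust)
  moreover have "Hyp b \<inter> Hypc b = {}" by (auto simp: Hyp_def Hypc_def)
  ultimately have "CARD(bit^'n) = card (Hyp b) + card (Hypc b)"
    by (metis card_Un_disjoint finite)
  then show "2 * card (Hyp b) = 2 ^ CARD('n)" "2 * card (Hypc b) = 2 ^ CARD('n)"
    using eq by (simp_all add: card_univ_vec)
qed

lemma range_eq:
  fixes F :: "bit^'n \<Rightarrow> bit^'n"
  assumes apn: "is_APN F" and a: "a \<noteq> 0" and b: "b \<noteq> 0"
  shows "range (Dder F a) \<subseteq> Hyp b \<Longrightarrow> range (Dder F a) = Hyp b"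
    and "range (Dder F a) \<subseteq> Hypc b \<Longrightarrow> range (Dder F a) = Hypc b"
  using range_card[OF apn a] hyp_card[OF b]
  by (metis card_subset_eq finite mult_left_cancel zero_neq_numeral)+


lemma dotp_add_left: "dotp (x + y) b = dotp x b + dotp y b"
  by (metis dotp_add dotp_comm)

lemma sgn_rearr1: "sgn_bit (y + c + (p + q)) = sgn_bit (c + q) * sgn_bit (y + p)"
  by (cases y; cases c; cases p; cases q) (simp_all add: sgn_bit_def)

lemma sgn_rearr2: "sgn_bit (y + p) * sgn_bit (z + (p + q)) = sgn_bit q * sgn_bit (y + z)"
  by (cases y; cases z; cases p; cases q) (simp_all add: sgn_bit_def)

lemma sqrt_pos: "sqrt (2 ^ n) \<noteq> (0::real)"
  by simp

lemma walsh_zero: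
  fixes F :: "bit^'n \<Rightarrow> bit^'n"
  assumes a: "a \<noteq> 0" and c: "\<And>x. component F b x + component F b (x + a) = c"
  shows "\<not> is_bent_component F b"
proof -
  obtain u where u: "c + dotp a u = 1"
  proof (cases "c = 1")
    case True
    then show ?thesis using that[of 0] by simp
  next
    case False
    then have c0: "c = 0" by simp
    obtain i where ai: "a $ i = 1" using a by (metis vec_eq_iff zero_index bit_not_zero_iff)
    show ?thesis using that[of "axis i 1"] c0 ai by (simp add: dotp_axis)
  qed
  have sh: "component F b (x + a) = component F b x + c" for x
  proof -
    have "component F b x + (component F b x + component F b (x + a)) = component F b x + c"
      using c by simp
    then show ?thesis by (simp add: add.assoc[symmetric])
  qed
  have "walsh F b u = (\<Sum>x\<in>UNIV. sgn_bit (component F b (x + a) + dotp (x + a) u))"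
    unfolding walsh_def by (rule sum_shift[symmetric])
  also have "\<dots> = (\<Sum>x\<in>UNIV. sgn_bit (c + dotp a u) * sgn_bit (component F b x + dotp x u))"
    by (rule sum.cong) (simp_all add: sh dotp_add_left sgn_rearr1)
  also have "\<dots> = - walsh F b u"
    unfolding u walsh_def by (simp add: sgn_bit_def sum_negf)
  finally have "walsh F b u = 0" by simp
  then show ?thesis unfolding is_bent_component_def by (metis abs_zero of_int_0 sqrt_pos)
qed

lemma balanced:
  fixes F :: "bit^'n \<Rightarrow> bit^'n"
  assumes quad: "is_quadratic F" and ne: "component F b e + component F b (e + a) \<noteq> component F b 0 + component F b (0 + a)"
  shows "(\<Sum>x\<in>UNIV. sgn_bit (component F b x + component F b (x + a))) = 0"
proof -
  define g where "g x = component F b x + component F b (x + a)" for x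
  have g1: "g 0 + g e = 1" using ne unfolding g_def[symmetric] by (cases "g 0"; cases "g e") simp_all
  have ge: "g (x + e) = g x + 1" for x
  proof -
    have "g x + g (x + e) = g 0 + g e"
      using quad4[OF quad, of b x a e] unfolding g_def by (simp add: algebra_simps)
    then have "g x + (g x + g (x + e)) = g x + 1" using g1 by simp
    then show ?thesis by (simp add: add.assoc[symmetric])
  qed
  have "(\<Sum>x\<in>UNIV. sgn_bit (g x)) = (\<Sum>x\<in>UNIV. sgn_bit (g (x + e)))"
    by (rule sum_shift[symmetric])
  also have "\<dots> = - (\<Sum>x\<in>UNIV. sgn_bit (g x))"
  proof -
    have "sgn_bit (y + 1) = - sgn_bit y" for y by (cases y) (simp_all add: sgn_bit_def)
    then show ?thesis by (simp add: ge sum_negf)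
  qed
  finally show ?thesis unfolding g_def by simp
qed


lemma bent_of_noV:
  fixes F :: "bit^'n \<Rightarrow> bit^'n"
  assumes quad: "is_quadratic F" and apn: "is_APN F" and b: "b \<noteq> 0"
    and noV: "\<And>a. a \<noteq> 0 \<Longrightarrow> a \<notin> Vset F b"
  shows "is_bent_component F b"
proof -
  let ?f = "component F b"
  have bal: "(\<Sum>x\<in>UNIV. sgn_bit (?f x + ?f (x + a))) = 0" if a: "a \<noteq> 0" for a
  proof -
    have "\<exists>e. ?f e + ?f (e + a) \<noteq> ?f 0 + ?f (0 + a)"
    proof (rule ccontr)
      assume "\<not> ?thesis"
      then have k: "\<And>x. dotp b (Dder F a x) = ?f 0 + ?f (0 + a)" by (simp add: comp_D)
      show False
      proof (cases "?f 0 + ?f (0 + a) = 0")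
        case True
        then have "range (Dder F a) \<subseteq> Hyp b" using k by (auto simp: Hyp_def)
        then have "range (Dder F a) = Hyp b" by (rule range_eq(1)[OF apn a b])
        then have "a \<in> Vset F b" by (simp add: Vset_def Tset_def)
        then show False using noV a by blast
      next
        case False
        then have "range (Dder F a) \<subseteq> Hypc b" using k by (auto simp: Hypc_def)
        then have "range (Dder F a) = Hypc b" by (rule range_eq(2)[OF apn a b])
        then have "a \<in> Vset F b" by (simp add: Vset_def Tcset_def)
        then show False using noV a by blast
      qed
    qed
    then obtain e where "?f e + ?f (e + a) \<noteq> ?f 0 + ?f (0 + a)" by blast
    then show ?thesis by (rule balanced[OF quad])
  qed
  have sq: "(walsh F b u)^2 = 2 ^ CARD('n)" for u
  proof -
    let ?s = "\<lambda>x. sgn_bit (?f x + dotp x u)"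
    have "(walsh F b u)^2 = (\<Sum>x\<in>UNIV. \<Sum>y\<in>UNIV. ?s x * ?s y)"
      unfolding walsh_def power2_eq_square sum_product ..
    also have "\<dots> = (\<Sum>x\<in>UNIV. \<Sum>a\<in>UNIV. ?s x * ?s (x + a))"
    proof (rule sum.cong[OF refl])
      fix x
      show "(\<Sum>y\<in>UNIV. ?s x * ?s y) = (\<Sum>a\<in>UNIV. ?s x * ?s (x + a))"
        using sum_shift[of "\<lambda>y. ?s x * ?s y" x] by (simp add: add.commute)
    qed
    also have "\<dots> = (\<Sum>x\<in>UNIV. \<Sum>a\<in>UNIV. sgn_bit (dotp a u) * sgn_bit (?f x + ?f (x + a)))"
      by (rule sum.cong[OF refl], rule sum.cong[OF refl]) (simp add: dotp_add_left sgn_rearr2)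
    also have "\<dots> = (\<Sum>a\<in>UNIV. sgn_bit (dotp a u) * (\<Sum>x\<in>UNIV. sgn_bit (?f x + ?f (x + a))))"
      by (subst sum.swap) (simp add: sum_distrib_left)
    also have "\<dots> = (\<Sum>a\<in>UNIV. if a = (0::bit^'n) then int CARD(bit^'n) else 0)"
      by (rule sum.cong[OF refl]) (auto simp: bal sgn_bit_def[of 0] dotp_comm[of 0])
    also have "\<dots> = 2 ^ CARD('n)" by simp
    finally show ?thesis .
  qed
  show ?thesis unfolding is_bent_component_def
  proof
    fix u
    have "sqrt (2 ^ CARD('n)) = sqrt ((real_of_int (walsh F b u))^2)"
      using arg_cong[OF sq[of u], of real_of_int] by simp
    then show "real_of_int \<bar>walsh F b u\<bar> = sqrt (2 ^ CARD('n))" by simp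
  qed
qed


lemma V_range: "a \<noteq> 0 \<Longrightarrow> a \<in> Vset F b \<longleftrightarrow> range (Dder F a) = Hyp b \<or> range (Dder F a) = Hypc b"
  unfolding Vset_def Tset_def Tcset_def by auto

lemma notbent_iff:
  fixes F :: "bit^'n \<Rightarrow> bit^'n"
  assumes quad: "is_quadratic F" and apn: "is_APN F" and b: "b \<noteq> 0"
  shows "\<not> is_bent_component F b \<longleftrightarrow> (\<exists>a\<in>Vset F b. a \<noteq> 0)"
proof
  assume "\<not> is_bent_component F b"
  then show "\<exists>a\<in>Vset F b. a \<noteq> 0" using bent_of_noV[OF quad apn b] by blast
next
  assume "\<exists>a\<in>Vset F b. a \<noteq> 0"
  then obtain a where a: "a \<noteq> 0" "a \<in> Vset F b" by blast
  then have "range (Dder F a) = Hyp b \<or> range (Dder F a) = Hypc b" using V_range by blast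
  then obtain c where "\<And>x. dotp b (Dder F a x) = c"
    by (metis (mono_tags, lifting) Hyp_def Hypc_def mem_Collect_eq rangeI)
  then have "\<And>x. component F b x + component F b (x + a) = c" by (simp add: comp_D)
  then show "\<not> is_bent_component F b" by (rule walsh_zero[OF a(1)])
qed

lemma dim_iff: "1 \<le> vec.dim S \<longleftrightarrow> (\<exists>a\<in>S. a \<noteq> 0)"
  using vec.dim_eq_0[of S] by (auto simp: not_less_eq_eq[symmetric] Suc_le_eq)

lemma dotp_det:
  fixes b1 b2 :: "bit^'n"
  assumes "\<And>x. dotp b1 x = dotp b2 x" shows "b1 = b2"
  using assms[of "axis _ 1"] by (simp add: vec_eq_iff dotp_axis)

lemma bit_eq_by0: "((x::bit) = 0 \<longleftrightarrow> y = 0) \<Longrightarrow> x = y"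
  by (cases x; cases y) simp_all

lemma hyp_inj: "Hyp b1 = Hyp b2 \<Longrightarrow> b1 = b2"
  by (rule dotp_det, rule bit_eq_by0) (auto simp: Hyp_def set_eq_iff)

lemma hypc_inj: "Hypc b1 = Hypc b2 \<Longrightarrow> b1 = b2"
  by (rule dotp_det, rule bit_eq_by0) (auto simp: Hypc_def set_eq_iff, metis bit_not_zero_iff, metis bit_not_zero_iff)

lemma hyp_hypc: "Hyp b1 \<noteq> Hypc b2"
proof
  assume "Hyp b1 = Hypc b2"
  moreover have "0 \<in> Hyp b1" by (simp add: Hyp_def)
  moreover have "0 \<notin> Hypc b2" by (simp add: Hypc_def)
  ultimately show False by simp
qed

theorem mainTheorem3:
  fixes F :: "bit ^ 'n \<Rightarrow> bit ^ 'n"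
  assumes "even CARD('n)"
    and "is_quadratic F"
    and "is_APN F"
  shows "card (NF F) = card (VF F)"
proof -
  have VFe: "VF F = Vset F ` NF F"
    unfolding VF_def NF_def using notbent_iff[OF assms(2,3)] dim_iff by auto
  have "inj_on (Vset F) (NF F)"
  proof (rule inj_onI)
    fix b1 b2 assume b1: "b1 \<in> NF F" and b2: "b2 \<in> NF F" and eq: "Vset F b1 = Vset F b2"
    from b1 obtain a where a: "a \<noteq> 0" "a \<in> Vset F b1"
      using notbent_iff[OF assms(2,3)] unfolding NF_def by blast
    then have "a \<in> Vset F b2" using eq by simp
    then show "b1 = b2" using a V_range hyp_inj hypc_inj hyp_hypc by metis
  qed
  then show ?thesis unfolding VFe by (simp add: card_image)
qed

end
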